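(* Let $\beta\in\mathbb{C}$ with $|\beta|=1$ and $\beta^n\neq1$ for all $n\in\mathbb{N}$. Let $m\in\mathrm{Hol}(\mathbb{D})$ with $m(z)\neq0$ for all $z\in\mathbb{D}$, write $m=\exp(m_1)$ with $m_1\in\mathrm{Hol}(\mathbb{D})$, $m_1(z)=\sum_{n\geq0}a_nz^n$, and let $T:\mathrm{Hol}(\mathbb{D})\to\mathrm{Hol}(\mathbb{D})$ be given by $(Tf)(z)=m(z)f(\beta z)$. (a) If $\limsup_{n\to\infty}\left(\frac{|a_n|}{|1-\beta^n|}\right)^{1/n}\leq1$, then $\sigma_p(T)=\{m(0)\beta^n:n\in\mathbb{N}_0\}$, and for each $n\in\mathbb{N}_0$, $\ker(T-m(0)\beta^n\mathrm{Id})$ is one-dimensional, generated by $f_n(z)=z^n\exp(g_1(z))$ where $g_1(z)=\sum_{k\geq1}\frac{a_k}{1-\beta^k}z^k$, $z\in\mathbb{D}$. (b) If $\limsup_{n\to\infty}\left(\frac{|a_n|}{|1-\beta^n|}\right)^{1/n}>1$, then $\sigma_p(T)=\emptyset$.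
   Context: $\mathbb{D}$ is the open unit disc, $\mathrm{Hol}(\mathbb{D})$ the Fréchet space of holomorphic functions on $\mathbb{D}$, $\mathbb{N}_0=\mathbb{N}\cup\{0\}$. $\sigma_p(T)$ is the set of $\lambda\in\mathbb{C}$ such that $\lambda\mathrm{Id}-T$ is not injective. *)

theory Defs
  imports "HOL-Complex_Analysis.Complex_Analysis" "HOL-Library.Liminf_Limsup"
begin

text \<open>Elements of Hol(D) are represented by functions holomorphic on the unit disc;
  two such functions are identified when they agree on the disc.\<close>

definition wco_op :: "(complex \<Rightarrow> complex) \<Rightarrow> complex \<Rightarrow> (complex \<Rightarrow> complex) \<Rightarrow> (complex \<Rightarrow> complex)" where
  "wco_op m \<beta> f = (\<lambda>z. m z * f (\<beta> * z))"

definition eig_kernel :: "((complex \<Rightarrow> complex) \<Rightarrow> (complex \<Rightarrow> complex)) \<Rightarrow> complex \<Rightarrow> (complex \<Rightarrow> complex) set" where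
  "eig_kernel T lam = {f. f holomorphic_on ball 0 1 \<and> (\<forall>z\<in>ball 0 1. T f z = lam * f z)}"

definition point_spectrum :: "((complex \<Rightarrow> complex) \<Rightarrow> (complex \<Rightarrow> complex)) \<Rightarrow> complex set" where
  "point_spectrum T = {lam. \<exists>f\<in>eig_kernel T lam. \<exists>z\<in>ball 0 1. f z \<noteq> 0}"

end

theory Submission
  imports Defs
begin

definition tc :: "(complex \<Rightarrow> complex) \<Rightarrow> nat \<Rightarrow> complex" where
  "tc F n = (deriv ^^ n) F 0 / fact n"

lemma radius_ge1:
  fixes c :: "nat \<Rightarrow> complex"
  assumes "\<And>z. z \<in> ball 0 1 \<Longrightarrow> summable (\<lambda>n. c n * z^n)"
  shows "conv_radius c \<ge> 1"
proof -
  have "conv_radius c \<ge> ereal 1"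
  proof (rule conv_radius_geI_ex')
    fix r :: real assume "0 < r" "ereal r < ereal 1"
    then show "summable (\<lambda>n. c n * of_real r ^ n)" using assms[of "of_real r"] by auto
  qed
  then show ?thesis by (simp add: one_ereal_def)
qed

lemma coeff_unique:
  fixes c d :: "nat \<Rightarrow> complex"
  assumes c: "\<And>z. z \<in> ball 0 1 \<Longrightarrow> (\<lambda>n. c n * z^n) sums F z"
      and d: "\<And>z. z \<in> ball 0 1 \<Longrightarrow> (\<lambda>n. d n * z^n) sums F z"
  shows "c = d"
proof -
  have rc: "conv_radius c \<ge> 1" by (rule radius_ge1) (use c sums_summable in blast)
  have rd: "conv_radius d \<ge> 1" by (rule radius_ge1) (use d sums_summable in blast)
  have ev: "eventually (\<lambda>z. z \<in> ball (0::complex) 1) (nhds 0)"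
    by (intro eventually_nhds_in_open) auto
  have "Abs_fps c = Abs_fps d"
  proof (rule eval_fps_eqD)
    show "fps_conv_radius (Abs_fps c) > 0" using rc by (simp add: fps_conv_radius_def) (rule order.strict_trans2[of 0 1], simp, assumption)
    show "fps_conv_radius (Abs_fps d) > 0" using rd by (simp add: fps_conv_radius_def) (rule order.strict_trans2[of 0 1], simp, assumption)
    show "eventually (\<lambda>z. eval_fps (Abs_fps c) z = eval_fps (Abs_fps d) z) (nhds 0)"
      using ev by eventually_elim (use c d in \<open>auto simp: eval_fps_def sums_iff\<close>)
  qed
  then have "fps_nth (Abs_fps c) n = fps_nth (Abs_fps d) n" for n by simp
  then show ?thesis by (simp add: fun_eq_iff)
qed

lemma tc_sums:
  assumes "F holomorphic_on ball 0 1" "z \<in> ball 0 1"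
  shows "(\<lambda>n. tc F n * z^n) sums F z"
  using holomorphic_power_series[OF assms] by (simp add: tc_def)

lemma rot_coeff:
  fixes \<beta> \<mu> :: complex
  assumes b: "norm \<beta> = 1" and hol: "F holomorphic_on ball 0 1"
    and rel: "\<And>z. z \<in> ball 0 1 \<Longrightarrow> F (\<beta> * z) = \<mu> * F z"
  shows "tc F k * \<beta> ^ k = \<mu> * tc F k"
proof -
  have "(\<lambda>k. tc F k * \<beta> ^ k) = (\<lambda>k. \<mu> * tc F k)"
  proof (rule coeff_unique)
    fix z :: complex assume z: "z \<in> ball 0 1"
    then have "\<beta> * z \<in> ball 0 1" using b by (simp add: norm_mult)
    from tc_sums[OF hol this] show "(\<lambda>n. tc F n * \<beta> ^ n * z ^ n) sums F (\<beta> * z)"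
      by (simp add: power_mult_distrib mult.assoc)
    show "(\<lambda>n. \<mu> * tc F n * z ^ n) sums F (\<beta> * z)"
      using sums_mult[OF tc_sums[OF hol z], of \<mu>] rel[OF z] by (simp add: mult.assoc)
  qed
  then show ?thesis by metis
qed

lemma beta_inj:
  fixes \<beta> :: complex
  assumes "norm \<beta> = 1" "\<forall>n::nat. n \<ge> 1 \<longrightarrow> \<beta> ^ n \<noteq> 1" "\<beta> ^ k = \<beta> ^ n"
  shows "k = n"
proof (rule ccontr)
  assume ne: "k \<noteq> n"
  have b0: "\<beta> \<noteq> 0" using assms(1) by auto
  have *: "\<beta> ^ i = \<beta> ^ j \<Longrightarrow> i < j \<Longrightarrow> False" for i j
  proof -
    assume e: "\<beta> ^ i = \<beta> ^ j" and ij: "i < j"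
    have "\<beta> ^ j = \<beta> ^ i * \<beta> ^ (j - i)" using ij by (simp add: power_add[symmetric])
    then have "\<beta> ^ (j - i) = 1" using e b0 by simp
    then show False using assms(2) ij by auto
  qed
  show False using ne *[of k n] *[of n k] assms(3) by (metis linorder_neqE_nat)
qed


definition cc :: "complex \<Rightarrow> (nat \<Rightarrow> complex) \<Rightarrow> nat \<Rightarrow> complex" where
  "cc \<beta> a n = a n / (1 - \<beta> ^ n)"

definition G1 :: "complex \<Rightarrow> (nat \<Rightarrow> complex) \<Rightarrow> complex \<Rightarrow> complex" where
  "G1 \<beta> a = (\<lambda>z. \<Sum>k. a (Suc k) / (1 - \<beta> ^ Suc k) * z ^ Suc k)"

context
  fixes \<beta> :: complex and m m1 :: "complex \<Rightarrow> complex" and a :: "nat \<Rightarrow> complex"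
  assumes beta_norm: "norm \<beta> = 1"
    and beta_pow: "\<forall>n::nat. n \<ge> 1 \<longrightarrow> \<beta> ^ n \<noteq> 1"
    and m_hol: "m holomorphic_on ball 0 1"
    and m_nz: "\<forall>z\<in>ball 0 1. m z \<noteq> 0"
    and m1_hol: "m1 holomorphic_on ball 0 1"
    and m_exp: "\<forall>z\<in>ball 0 1. m z = exp (m1 z)"
    and m1_series: "\<forall>z\<in>ball 0 1. (\<lambda>n. a n * z ^ n) sums m1 z"
begin

lemma a0: "a 0 = m1 0" "m 0 = exp (a 0)" "m 0 \<noteq> 0"
proof -
  show *: "a 0 = m1 0" using bspec[OF m1_series, of 0] by simp
  show "m 0 = exp (a 0)" using m_exp * by auto
  then show "m 0 \<noteq> 0" by simp
qed

lemma rotB: "z \<in> ball 0 1 \<Longrightarrow> \<beta> * z \<in> ball 0 1"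
  using beta_norm by (simp add: norm_mult)

lemma one_minus_nz: "n \<ge> 1 \<Longrightarrow> 1 - \<beta> ^ n \<noteq> 0"
  using beta_pow by auto

lemma limsup_eq:
  "limsup (\<lambda>n. ereal (root n (norm (a n) / norm (1 - \<beta> ^ n)))) = limsup (\<lambda>n. ereal (root n (norm (cc \<beta> a n))))"
  by (simp add: cc_def norm_divide)

lemma conv_cc: "conv_radius (cc \<beta> a) = inverse (limsup (\<lambda>n. ereal (root n (norm (a n) / norm (1 - \<beta> ^ n)))))"
  unfolding limsup_eq conv_radius_def ..

lemma G1_sums:
  assumes "summable (\<lambda>n. cc \<beta> a n * z ^ n)"
  shows "(\<lambda>n. cc \<beta> a n * z ^ n) sums G1 \<beta> a z"
proof -
  have "summable (\<lambda>n. cc \<beta> a (Suc n) * z ^ Suc n)"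
    using assms summable_Suc_iff[where f="\<lambda>n. cc \<beta> a n * z ^ n"] by simp
  then have "(\<lambda>n. cc \<beta> a (Suc n) * z ^ Suc n) sums G1 \<beta> a z"
    by (simp add: G1_def cc_def summable_sums)
  then show ?thesis
    using sums_Suc_iff[where f="\<lambda>n. cc \<beta> a n * z ^ n"] by (simp add: cc_def)
qed

lemma rel_general:
  assumes z: "z \<in> ball 0 1"
    and s1: "(\<lambda>n. q n * z ^ n) sums Q z" and s2: "(\<lambda>n. q n * (\<beta> * z) ^ n) sums Q (\<beta> * z)"
    and q: "\<And>n. n \<ge> 1 \<Longrightarrow> q n = cc \<beta> a n"
  shows "Q z - Q (\<beta> * z) = m1 z - a 0"
proof -
  have A: "(\<lambda>n. q n * z ^ n - q n * (\<beta> * z) ^ n) sums (Q z - Q (\<beta> * z))"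
    by (rule sums_diff[OF s1 s2])
  have B: "(\<lambda>n. a n * z ^ n - (if n = 0 then a 0 else 0)) sums (m1 z - a 0)"
    using sums_diff[OF bspec[OF m1_series z] sums_single[of 0 "\<lambda>_. a 0"]] by simp
  have "(\<lambda>n. q n * z ^ n - q n * (\<beta> * z) ^ n) = (\<lambda>n. a n * z ^ n - (if n = 0 then a 0 else 0))"
  proof
    fix n :: nat
    show "q n * z ^ n - q n * (\<beta> * z) ^ n = a n * z ^ n - (if n = 0 then a 0 else 0)"
    proof (cases "n = 0")
      case True then show ?thesis by simp
    next
      case False
      then have n1: "n \<ge> 1" by simp
      have "q n * z ^ n - q n * (\<beta> * z) ^ n = cc \<beta> a n * (1 - \<beta> ^ n) * z ^ n"
        using q[OF n1] by (simp add: power_mult_distrib algebra_simps)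
      also have "\<dots> = a n * z ^ n" using one_minus_nz[OF n1] by (simp add: cc_def)
      finally show ?thesis using False by simp
    qed
  qed
  then show ?thesis using A B sums_unique2 by metis
qed


lemma limsup_nonneg: "0 \<le> limsup (\<lambda>n. ereal (root n (norm (a n) / norm (1 - \<beta> ^ n))))"
proof -
  have "0 = limsup (\<lambda>n. 0::ereal)" by (simp add: Limsup_const)
  also have "\<dots> \<le> limsup (\<lambda>n. ereal (root n (norm (a n) / norm (1 - \<beta> ^ n))))"
    by (intro Limsup_mono) (simp_all add: real_root_ge_zero)
  finally show ?thesis .
qed

lemma ereal_inv_ge1: "0 \<le> (L::ereal) \<Longrightarrow> L \<le> 1 \<Longrightarrow> 1 \<le> inverse L"
  by (cases L) (auto simp: one_ereal_def one_le_inverse)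

lemma ereal_inv_lt1: 
  assumes "(L::ereal) > 1" shows "inverse L < 1"
proof (cases L)
  case (real r)
  then have "r > 1" using assms by (simp add: one_ereal_def)
  then have "inverse r < 1" by (simp add: inverse_less_1_iff)
  moreover have "r \<noteq> 0" using \<open>r > 1\<close> by simp
  ultimately show ?thesis using real by (simp add: one_ereal_def)
qed (use assms in auto)

context
  assumes LA: "limsup (\<lambda>n. ereal (root n (norm (a n) / norm (1 - \<beta> ^ n)))) \<le> 1"
begin

lemma conv_ge1: "conv_radius (cc \<beta> a) \<ge> 1"
  unfolding conv_cc using ereal_inv_ge1[OF limsup_nonneg LA] .

lemma A_summable: "z \<in> ball 0 1 \<Longrightarrow> summable (\<lambda>n. cc \<beta> a n * z ^ n)"
proof (rule summable_in_conv_radius)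
  assume "z \<in> ball 0 1"
  then have "ereal (norm z) < 1" by simp
  then show "ereal (norm z) < conv_radius (cc \<beta> a)" using conv_ge1 by (rule order.strict_trans2)
qed

lemma A_G1_sums: "z \<in> ball 0 1 \<Longrightarrow> (\<lambda>n. cc \<beta> a n * z ^ n) sums G1 \<beta> a z"
  by (rule G1_sums[OF A_summable])

lemma G1_hol: "G1 \<beta> a holomorphic_on ball 0 1"
  by (rule power_series_holomorphic[where a="cc \<beta> a"]) (use A_G1_sums in simp)

lemma G1_rel: "z \<in> ball 0 1 \<Longrightarrow> G1 \<beta> a z - G1 \<beta> a (\<beta> * z) = m1 z - a 0"
  by (rule rel_general[where q="cc \<beta> a"]) (auto intro!: A_G1_sums rotB)

lemma G1_rel_exp: "z \<in> ball 0 1 \<Longrightarrow> m z * exp (G1 \<beta> a (\<beta> * z)) = m 0 * exp (G1 \<beta> a z)"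
proof -
  assume z: "z \<in> ball 0 1"
  have "G1 \<beta> a (\<beta> * z) = G1 \<beta> a z - m1 z + a 0" using G1_rel[OF z] by (simp add: algebra_simps)
  then have "m z * exp (G1 \<beta> a (\<beta> * z)) = exp (m1 z) * exp (G1 \<beta> a z - m1 z + a 0)"
    using m_exp z by simp
  also have "\<dots> = exp (a 0) * exp (G1 \<beta> a z)" by (simp add: exp_add[symmetric] exp_diff add.commute)
  finally show ?thesis using a0 by simp
qed

lemma F_rel:
  assumes f: "f \<in> eig_kernel (wco_op m \<beta>) lam" and z: "z \<in> ball 0 1"
  shows "f (\<beta> * z) * exp (- G1 \<beta> a (\<beta> * z)) = (lam / m 0) * (f z * exp (- G1 \<beta> a z))"
proof -
  have e: "m z * f (\<beta> * z) = lam * f z" using f z by (auto simp: eig_kernel_def wco_op_def)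
  have mz: "m z \<noteq> 0" using m_nz z by auto
  have "exp (- G1 \<beta> a (\<beta> * z)) = m z * exp (- G1 \<beta> a z) / m 0"
    using G1_rel_exp[OF z] a0(3) mz by (simp add: exp_minus field_simps)
  then have "f (\<beta> * z) * exp (- G1 \<beta> a (\<beta> * z)) = (m z * f (\<beta> * z)) * exp (- G1 \<beta> a z) / m 0"
    by simp
  also have "\<dots> = (lam / m 0) * (f z * exp (- G1 \<beta> a z))" using e by simp
  finally show ?thesis .
qed

lemma fn_eig: "(\<lambda>z. z ^ n * exp (G1 \<beta> a z)) \<in> eig_kernel (wco_op m \<beta>) (m 0 * \<beta> ^ n)"
  unfolding eig_kernel_def wco_op_def
proof safe
  show "(\<lambda>z. z ^ n * exp (G1 \<beta> a z)) holomorphic_on ball 0 1"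
    using G1_hol by (intro holomorphic_intros) auto
  fix z :: complex assume z: "z \<in> ball 0 1"
  have "m z * ((\<beta> * z) ^ n * exp (G1 \<beta> a (\<beta> * z))) = \<beta> ^ n * z ^ n * (m z * exp (G1 \<beta> a (\<beta> * z)))"
    by (simp add: power_mult_distrib)
  also have "\<dots> = m 0 * \<beta> ^ n * (z ^ n * exp (G1 \<beta> a z))" using G1_rel_exp[OF z] by simp
  finally show "m z * ((\<beta> * z) ^ n * exp (G1 \<beta> a (\<beta> * z))) = m 0 * \<beta> ^ n * (z ^ n * exp (G1 \<beta> a z))" .
qed


lemma F_coeff:
  assumes f: "f \<in> eig_kernel (wco_op m \<beta>) lam"
  shows "(\<lambda>z. f z * exp (- G1 \<beta> a z)) holomorphic_on ball 0 1"
    and "tc (\<lambda>z. f z * exp (- G1 \<beta> a z)) k * \<beta> ^ k = (lam / m 0) * tc (\<lambda>z. f z * exp (- G1 \<beta> a z)) k"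
proof -
  have fh: "f holomorphic_on ball 0 1" using f by (simp add: eig_kernel_def)
  show hol: "(\<lambda>z. f z * exp (- G1 \<beta> a z)) holomorphic_on ball 0 1"
    using fh G1_hol by (intro holomorphic_intros) auto
  show "tc (\<lambda>z. f z * exp (- G1 \<beta> a z)) k * \<beta> ^ k = (lam / m 0) * tc (\<lambda>z. f z * exp (- G1 \<beta> a z)) k"
    by (rule rot_coeff[OF beta_norm hol]) (use F_rel[OF f] in auto)
qed

lemma A_unique:
  assumes f: "f \<in> eig_kernel (wco_op m \<beta>) (m 0 * \<beta> ^ n)"
  shows "\<exists>c. \<forall>z\<in>ball 0 1. f z = c * (z ^ n * exp (G1 \<beta> a z))"
proof -
  define F where "F = (\<lambda>z. f z * exp (- G1 \<beta> a z))"
  have hol: "F holomorphic_on ball 0 1" using F_coeff(1)[OF f] by (simp add: F_def)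
  have co: "tc F k * \<beta> ^ k = \<beta> ^ n * tc F k" for k
    using F_coeff(2)[OF f, of k] a0(3) by (simp add: F_def)
  have z: "tc F k = 0" if "k \<noteq> n" for k
  proof (rule ccontr)
    assume "tc F k \<noteq> 0"
    then have "\<beta> ^ k = \<beta> ^ n" using co[of k] by (simp add: mult.commute)
    then show False using beta_inj[OF beta_norm beta_pow] that by blast
  qed
  show ?thesis
  proof (intro exI ballI)
    fix w :: complex assume w: "w \<in> ball 0 1"
    have "(\<lambda>k. tc F k * w ^ k) = (\<lambda>k. if k = n then tc F n * w ^ n else 0)"
      using z by auto
    then have "(\<lambda>k. if k = n then tc F n * w ^ n else 0) sums F w" using tc_sums[OF hol w] by simp
    moreover have "(\<lambda>k. if k = n then tc F n * w ^ n else 0) sums (tc F n * w ^ n)"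
      using sums_single[of n "\<lambda>_. tc F n * w ^ n"] by simp
    ultimately have "F w = tc F n * w ^ n" using sums_unique2 by blast
    then show "f w = tc F n * (w ^ n * exp (G1 \<beta> a w))"
      by (simp add: F_def exp_minus field_simps)
  qed
qed

lemma A_spec: "point_spectrum (wco_op m \<beta>) = {m 0 * \<beta> ^ n | n. True}"
proof safe
  fix lam assume "lam \<in> point_spectrum (wco_op m \<beta>)"
  then obtain f w where f: "f \<in> eig_kernel (wco_op m \<beta>) lam" and w: "w \<in> ball 0 1" "f w \<noteq> 0"
    by (auto simp: point_spectrum_def)
  define F where "F = (\<lambda>z. f z * exp (- G1 \<beta> a z))"
  have hol: "F holomorphic_on ball 0 1" using F_coeff(1)[OF f] by (simp add: F_def)
  have co: "tc F k * \<beta> ^ k = (lam / m 0) * tc F k" for k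
    using F_coeff(2)[OF f, of k] by (simp add: F_def)
  have "\<exists>k. tc F k \<noteq> 0"
  proof (rule ccontr)
    assume "\<not> (\<exists>k. tc F k \<noteq> 0)"
    then have "(\<lambda>k. tc F k * w ^ k) = (\<lambda>_. 0)" by auto
    then have "F w = 0" using tc_sums[OF hol w(1)] sums_zero sums_unique2 by metis
    then show False using w(2) by (simp add: F_def)
  qed
  then obtain k where k: "tc F k \<noteq> 0" by blast
  have "tc F k * \<beta> ^ k = tc F k * (lam / m 0)" using co[of k] by (simp add: algebra_simps)
  then have "\<beta> ^ k = lam / m 0" using k mult_left_cancel by (metis times_divide_eq_right)
  then have "lam = m 0 * \<beta> ^ k" using a0(3) by simp
  then show "\<exists>n. lam = m 0 * \<beta> ^ n \<and> True" by blast
next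
  fix n :: nat
  show "m 0 * \<beta> ^ n \<in> point_spectrum (wco_op m \<beta>)"
  proof -
    have "(\<lambda>z. z ^ n * exp (G1 \<beta> a z)) (1/2) \<noteq> 0" by simp
    moreover have "(1/2::complex) \<in> ball 0 1" by simp
    ultimately show ?thesis unfolding point_spectrum_def mem_Collect_eq
      by (intro bexI[OF _ fn_eig[of n]] bexI[of _ "1/2"])
  qed
qed

end


lemma B_no_eig:
  assumes LB: "limsup (\<lambda>n. ereal (root n (norm (a n) / norm (1 - \<beta> ^ n)))) > 1"
    and f: "f \<in> eig_kernel (wco_op m \<beta>) lam" and w: "w \<in> ball 0 1" "f w \<noteq> 0"
  shows False
proof -
  define B where "B = ball (0::complex) 1"
  have fh: "f holomorphic_on B" using f by (simp add: eig_kernel_def B_def)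
  have e: "m z * f (\<beta> * z) = lam * f z" if "z \<in> B" for z
    using f that by (auto simp: eig_kernel_def wco_op_def B_def)
  have rB: "\<beta> * z \<in> B" if "z \<in> B" for z using rotB that by (simp add: B_def)
  have mnz: "m z \<noteq> 0" if "z \<in> B" for z using m_nz that by (simp add: B_def)
  have b0: "\<beta> \<noteq> 0" using beta_norm by auto
  have oB: "open B" and cB: "connected B" and cvB: "convex B" by (auto simp: B_def)
  have nz: "f z \<noteq> 0" if z: "z \<in> B" "z \<noteq> 0" for z
  proof
    assume fz: "f z = 0"
    have orb: "\<beta> ^ n * z \<in> B \<and> f (\<beta> ^ n * z) = 0" for n
    proof (induction n)
      case 0 then show ?case using z fz by simp
    next
      case (Suc n)
      then have y: "\<beta> ^ n * z \<in> B" and fy: "f (\<beta> ^ n * z) = 0" by auto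
      have eq: "\<beta> ^ Suc n * z = \<beta> * (\<beta> ^ n * z)" by (simp add: mult.assoc)
      have "m (\<beta> ^ n * z) * f (\<beta> * (\<beta> ^ n * z)) = 0" using e[OF y] fy by simp
      then have "f (\<beta> * (\<beta> ^ n * z)) = 0" using mnz[OF y] by simp
      then show ?case unfolding eq using rB[OF y] by blast
    qed
    define U where "U = range (\<lambda>n. \<beta> ^ n * z)"
    have "inj (\<lambda>n. \<beta> ^ n * z)"
    proof (rule injI)
      fix i j assume "\<beta> ^ i * z = \<beta> ^ j * z"
      then have "\<beta> ^ i = \<beta> ^ j" using z(2) by simp
      then show "i = j" using beta_inj[OF beta_norm beta_pow] by blast
    qed
    then have infU: "infinite U" unfolding U_def using range_inj_infinite by blast
    have Usub: "U \<subseteq> sphere 0 (norm z)"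
      unfolding U_def using beta_norm by (auto simp: norm_mult norm_power)
    have "compact (sphere (0::complex) (norm z))" by (rule compact_sphere)
    then have "\<exists>x\<in>sphere 0 (norm z). x islimpt U"
      using compact_eq_Bolzano_Weierstrass[of "sphere (0::complex) (norm z)"] infU Usub by blast
    then obtain \<xi> where \<xi>: "\<xi> \<in> sphere 0 (norm z)" "\<xi> islimpt U" by blast
    have "\<xi> \<in> B" using \<xi>(1) z(1) by (simp add: B_def)
    have UB: "U \<subseteq> B" using orb unfolding U_def by auto
    have "f w = 0"
      by (rule analytic_continuation[OF fh oB cB UB \<open>\<xi> \<in> B\<close> \<xi>(2), where w=w])
         (use orb in \<open>force simp: U_def\<close>, use w in \<open>simp add: B_def\<close>)
    then show False using w by simp
  qed
  define ec where "ec = tc f"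
  have fs: "(\<lambda>n. ec n * z ^ n) sums f z" if "z \<in> B" for z
    using tc_sums[OF fh[unfolded B_def]] that by (simp add: ec_def B_def)
  have "\<exists>k. ec k \<noteq> 0"
  proof (rule ccontr)
    assume "\<not> (\<exists>k. ec k \<noteq> 0)"
    then have "(\<lambda>k. ec k * w ^ k) = (\<lambda>_. 0)" by auto
    moreover have "w \<in> B" using w(1) by (simp add: B_def)
    ultimately have "(\<lambda>_. 0) sums f w" using fs[of w] by simp
    then have "f w = 0" using sums_zero sums_unique2 by blast
    then show False using w(2) by simp
  qed
  define k0 where "k0 = (LEAST k. ec k \<noteq> 0)"
  have ek0: "ec k0 \<noteq> 0" unfolding k0_def using \<open>\<exists>k. ec k \<noteq> 0\<close> by (rule LeastI_ex)
  have elow: "ec i = 0" if "i < k0" for i using that unfolding k0_def by (rule not_less_Least[of i "\<lambda>k. ec k \<noteq> 0", simplified])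
  define h where "h z = (\<Sum>j. ec (j + k0) * z ^ j)" for z
  have hs: "(\<lambda>j. ec (j + k0) * z ^ j) sums h z \<and> f z = z ^ k0 * h z" if zB: "z \<in> B" for z
  proof (cases "z = 0")
    case True
    have "h 0 = ec k0" by (simp add: h_def)
    moreover have "f 0 = ec 0" using fs[of 0] zB True by simp
    moreover have "ec 0 = 0 ^ k0 * ec k0" using elow[of 0] by (cases k0) auto
    ultimately show ?thesis using True powser_sums_zero[of "\<lambda>j. ec (j + k0)"] by simp
  next
    case False
    have "(\<lambda>i. ec (i + k0) * z ^ (i + k0)) sums f z"
      using sums_zero_iff_shift[of k0 "\<lambda>n. ec n * z ^ n" "f z"] elow fs[OF zB] by simp
    then have "(\<lambda>i. z ^ k0 * (ec (i + k0) * z ^ i)) sums f z"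
      by (simp add: power_add algebra_simps)
    then have s: "(\<lambda>i. ec (i + k0) * z ^ i) sums (f z / z ^ k0)"
      by (rule sums_mult_D) (use False in simp)
    then have "h z = f z / z ^ k0" by (simp add: h_def sums_iff)
    then show ?thesis using s False by simp
  qed
  have hh: "h holomorphic_on B"
    unfolding B_def by (rule power_series_holomorphic[where a="\<lambda>j. ec (j + k0)"]) (use hs in \<open>auto simp: B_def\<close>)
  have hnz: "h z \<noteq> 0" if "z \<in> B" for z
  proof (cases "z = 0")
    case True then show ?thesis using ek0 by (simp add: h_def)
  next
    case False then show ?thesis using hs[OF that] nz[OF that] by auto
  qed
  obtain g where gh: "g holomorphic_on B" and gexp: "\<And>z. z \<in> B \<Longrightarrow> exp (g z) = h z"
    using holomorphic_logarithm_exists[OF cvB oB hh hnz, of 0] by (auto simp: B_def)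
  have hrotB: "(\<lambda>z. h (\<beta> * z)) holomorphic_on B"
  proof -
    have "(h \<circ> (\<lambda>z. \<beta> * z)) holomorphic_on B"
      by (rule holomorphic_on_compose) (auto intro!: holomorphic_intros holomorphic_on_subset[OF hh] rB)
    then show ?thesis by (simp add: o_def)
  qed
  have mh: "m holomorphic_on B" using m_hol by (simp add: B_def)
  have D0: "\<beta> ^ k0 * h (\<beta> * z) * m z - lam * h z = 0" if zB: "z \<in> B" for z
  proof (rule analytic_continuation[where S=B and U="B - {0}" and \<xi>=0 and w=z and f="\<lambda>z. \<beta> ^ k0 * h (\<beta> * z) * m z - lam * h z"])
    show "(\<lambda>z. \<beta> ^ k0 * h (\<beta> * z) * m z - lam * h z) holomorphic_on B"
      using hrotB mh hh by (intro holomorphic_intros) auto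
    show "(0::complex) islimpt B - {0}"
    proof -
      have "(0::complex) islimpt B" unfolding B_def by (simp add: islimpt_ball)
      then show ?thesis using islimpt_punctured[of "0::complex" B] by blast
    qed
    fix y assume y: "y \<in> B - {0}"
    then have yB: "y \<in> B" and y0: "y \<noteq> 0" by auto
    have "m y * ((\<beta> * y) ^ k0 * h (\<beta> * y)) = lam * (y ^ k0 * h y)"
      using e[OF yB] hs[OF yB] hs[OF rB[OF yB]] by simp
    then have "y ^ k0 * (\<beta> ^ k0 * h (\<beta> * y) * m y - lam * h y) = 0"
      by (simp add: power_mult_distrib algebra_simps)
    then show "\<beta> ^ k0 * h (\<beta> * y) * m y - lam * h y = 0" using y0 by simp
  qed (use oB cB zB in \<open>auto simp: B_def\<close>)
  have "0 \<in> B" by (simp add: B_def)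
  have lam: "lam = \<beta> ^ k0 * m 0"
  proof -
    have "\<beta> ^ k0 * h 0 * m 0 = lam * h 0" using D0[OF \<open>0 \<in> B\<close>] by simp
    then show ?thesis using hnz[OF \<open>0 \<in> B\<close>] by (simp add: algebra_simps)
  qed
  define E where "E z = g (\<beta> * z) + m1 z - a 0 - g z" for z
  have expE: "exp (E z) = 1" if zB: "z \<in> B" for z
  proof -
    have "\<beta> ^ k0 * (h (\<beta> * z) * m z - m 0 * h z) = 0"
      using D0[OF zB] lam by (simp add: algebra_simps)
    then have "h (\<beta> * z) * m z = m 0 * h z" using b0 by simp
    then have "exp (g (\<beta> * z)) * exp (m1 z) = exp (a 0) * exp (g z)"
      using gexp[OF zB] gexp[OF rB[OF zB]] m_exp zB a0(2) by (simp add: B_def)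
    then have "exp (g (\<beta> * z) + m1 z) = exp (a 0 + g z)" by (simp add: exp_add)
    then show ?thesis unfolding E_def by (simp add: exp_diff exp_add)
  qed
  have grotB: "(\<lambda>z. g (\<beta> * z)) holomorphic_on B"
  proof -
    have "(g \<circ> (\<lambda>z. \<beta> * z)) holomorphic_on B"
      by (rule holomorphic_on_compose) (auto intro!: holomorphic_intros holomorphic_on_subset[OF gh] rB)
    then show ?thesis by (simp add: o_def)
  qed
  have Eh: "E holomorphic_on B"
    unfolding E_def[abs_def] using grotB gh m1_hol by (intro holomorphic_intros) (auto simp: B_def)
  have "\<exists>C. \<forall>x\<in>B. E x = C"
  proof (rule has_field_derivative_zero_constant[OF cvB])
    fix x assume xB: "x \<in> B"
    obtain E' where E': "(E has_field_derivative E') (at x)"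
      using Eh oB xB by (auto simp: holomorphic_on_open)
    have d1: "((\<lambda>z. exp (E z)) has_field_derivative exp (E x) * E') (at x)"
      using DERIV_chain2[OF DERIV_exp E'] .
    have d2: "((\<lambda>z. exp (E z)) has_field_derivative 0) (at x)"
      by (rule has_field_derivative_transform_within_open[OF DERIV_const[of 1] oB xB]) (use expE in simp)
    have "exp (E x) * E' = 0" using DERIV_unique[OF d1 d2] .
    then have "E' = 0" by simp
    then show "(E has_field_derivative 0) (at x within B)"
      using E' by (simp add: has_field_derivative_at_within)
  qed
  then obtain C where C: "\<And>x. x \<in> B \<Longrightarrow> E x = C" by blast
  have "E 0 = 0" using a0(1) by (simp add: E_def)
  then have E0: "E z = 0" if "z \<in> B" for z using C[OF that] C[OF \<open>0 \<in> B\<close>] by simp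
  define q where "q = tc g"
  have gs: "(\<lambda>n. q n * z ^ n) sums g z" if "z \<in> B" for z
    using tc_sums[OF gh[unfolded B_def]] that by (simp add: q_def B_def)
  have "(\<lambda>n. q n * (1 - \<beta> ^ n)) = (\<lambda>n. if n = 0 then 0 else a n)"
  proof (rule coeff_unique)
    fix z :: complex assume z: "z \<in> ball 0 1"
    then have zB: "z \<in> B" by (simp add: B_def)
    have "(\<lambda>n. q n * z ^ n - q n * (\<beta> * z) ^ n) sums (g z - g (\<beta> * z))"
      by (rule sums_diff[OF gs[OF zB] gs[OF rB[OF zB]]])
    moreover have "g z - g (\<beta> * z) = m1 z - a 0" using E0[OF zB] by (simp add: E_def algebra_simps)
    ultimately show "(\<lambda>n. q n * (1 - \<beta> ^ n) * z ^ n) sums (m1 z - a 0)"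
      by (simp add: power_mult_distrib algebra_simps)
    have "(\<lambda>n. a n * z ^ n - (if n = 0 then a 0 else 0)) sums (m1 z - a 0)"
      using sums_diff[OF bspec[OF m1_series z] sums_single[of 0 "\<lambda>_. a 0"]] by simp
    moreover have "(\<lambda>n. a n * z ^ n - (if n = 0 then a 0 else 0)) = (\<lambda>n. (if n = 0 then 0 else a n) * z ^ n)"
      by auto
    ultimately show "(\<lambda>n. (if n = 0 then 0 else a n) * z ^ n) sums (m1 z - a 0)" by simp
  qed
  then have qn: "q n = cc \<beta> a n" if "n \<ge> 1" for n
  proof -
    assume eq: "(\<lambda>n. q n * (1 - \<beta> ^ n)) = (\<lambda>n. if n = 0 then 0 else a n)"
    have "q n * (1 - \<beta> ^ n) = a n" using fun_cong[OF eq, of n] that by simp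
    then show ?thesis using one_minus_nz[OF that] by (simp add: cc_def field_simps)
  qed
  have "conv_radius (cc \<beta> a) \<ge> 1"
  proof (rule radius_ge1)
    fix z :: complex assume "z \<in> ball 0 1"
    then have "summable (\<lambda>n. q n * z ^ n)" using gs sums_summable by (auto simp: B_def)
    then have "summable (\<lambda>n. q (Suc n) * z ^ Suc n)"
      using summable_Suc_iff[where f="\<lambda>n. q n * z ^ n"] by simp
    then have "summable (\<lambda>n. cc \<beta> a (Suc n) * z ^ Suc n)" using qn by simp
    then show "summable (\<lambda>n. cc \<beta> a n * z ^ n)"
      using summable_Suc_iff[where f="\<lambda>n. cc \<beta> a n * z ^ n"] by simp
  qed
  moreover have "conv_radius (cc \<beta> a) < 1" unfolding conv_cc using ereal_inv_lt1[OF LB] .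
  ultimately show False by simp
qed

end

theorem theorem3p7:
  fixes \<beta> :: complex and m m1 :: "complex \<Rightarrow> complex" and a :: "nat \<Rightarrow> complex"
  assumes beta_norm: "norm \<beta> = 1"
    and beta_pow: "\<forall>n::nat. n \<ge> 1 \<longrightarrow> \<beta> ^ n \<noteq> 1"
    and m_hol: "m holomorphic_on ball 0 1"
    and m_nz: "\<forall>z\<in>ball 0 1. m z \<noteq> 0"
    and m1_hol: "m1 holomorphic_on ball 0 1"
    and m_exp: "\<forall>z\<in>ball 0 1. m z = exp (m1 z)"
    and m1_series: "\<forall>z\<in>ball 0 1. (\<lambda>n. a n * z ^ n) sums m1 z"
  shows
    "(limsup (\<lambda>n. ereal (root n (norm (a n) / norm (1 - \<beta> ^ n)))) \<le> 1 \<longrightarrow>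
        point_spectrum (wco_op m \<beta>) = {m 0 * \<beta> ^ n | n. True} \<and>
        (\<forall>n::nat.
           let g1 = (\<lambda>z. \<Sum>k. a (Suc k) / (1 - \<beta> ^ Suc k) * z ^ Suc k);
               fn = (\<lambda>z. z ^ n * exp (g1 z))
           in fn \<in> eig_kernel (wco_op m \<beta>) (m 0 * \<beta> ^ n) \<and>
              (\<exists>z\<in>ball 0 1. fn z \<noteq> 0) \<and>
              (\<forall>f\<in>eig_kernel (wco_op m \<beta>) (m 0 * \<beta> ^ n).
                  \<exists>c. \<forall>z\<in>ball 0 1. f z = c * fn z)))
     \<and>
     (limsup (\<lambda>n. ereal (root n (norm (a n) / norm (1 - \<beta> ^ n)))) > 1 \<longrightarrow>
        point_spectrum (wco_op m \<beta>) = {})"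
  proof (intro conjI impI)
  note ctx = beta_norm beta_pow m_hol m_nz m1_hol m_exp m1_series
  assume LA: "limsup (\<lambda>n. ereal (root n (norm (a n) / norm (1 - \<beta> ^ n)))) \<le> 1"
  show "point_spectrum (wco_op m \<beta>) = {m 0 * \<beta> ^ n | n. True}"
    by (rule A_spec[OF ctx LA])
  show "\<forall>n::nat.
           let g1 = (\<lambda>z. \<Sum>k. a (Suc k) / (1 - \<beta> ^ Suc k) * z ^ Suc k);
               fn = (\<lambda>z. z ^ n * exp (g1 z))
           in fn \<in> eig_kernel (wco_op m \<beta>) (m 0 * \<beta> ^ n) \<and>
              (\<exists>z\<in>ball 0 1. fn z \<noteq> 0) \<and>
              (\<forall>f\<in>eig_kernel (wco_op m \<beta>) (m 0 * \<beta> ^ n).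
                  \<exists>c. \<forall>z\<in>ball 0 1. f z = c * fn z)"
  proof (intro allI)
    fix n :: nat
    have g: "(\<lambda>z. \<Sum>k. a (Suc k) / (1 - \<beta> ^ Suc k) * z ^ Suc k) = G1 \<beta> a" by (simp add: G1_def)
    have 1: "(\<lambda>z. z ^ n * exp (G1 \<beta> a z)) \<in> eig_kernel (wco_op m \<beta>) (m 0 * \<beta> ^ n)"
      by (rule fn_eig[OF ctx LA])
    have 2: "\<exists>z\<in>ball 0 1. (\<lambda>z. z ^ n * exp (G1 \<beta> a z)) z \<noteq> 0"
      by (rule bexI[of _ "1/2"]) auto
    have 3: "\<forall>f\<in>eig_kernel (wco_op m \<beta>) (m 0 * \<beta> ^ n).
                  \<exists>c. \<forall>z\<in>ball 0 1. f z = c * (\<lambda>z. z ^ n * exp (G1 \<beta> a z)) z"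
      using A_unique[OF ctx LA] by simp
    show "let g1 = (\<lambda>z. \<Sum>k. a (Suc k) / (1 - \<beta> ^ Suc k) * z ^ Suc k);
               fn = (\<lambda>z. z ^ n * exp (g1 z))
           in fn \<in> eig_kernel (wco_op m \<beta>) (m 0 * \<beta> ^ n) \<and>
              (\<exists>z\<in>ball 0 1. fn z \<noteq> 0) \<and>
              (\<forall>f\<in>eig_kernel (wco_op m \<beta>) (m 0 * \<beta> ^ n).
                  \<exists>c. \<forall>z\<in>ball 0 1. f z = c * fn z)"
      unfolding Let_def g using 1 2 3 by blast
  qed
next
  note ctx = beta_norm beta_pow m_hol m_nz m1_hol m_exp m1_series
  assume LB: "limsup (\<lambda>n. ereal (root n (norm (a n) / norm (1 - \<beta> ^ n)))) > 1"
  show "point_spectrum (wco_op m \<beta>) = {}"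
  proof (rule ccontr)
    assume "point_spectrum (wco_op m \<beta>) \<noteq> {}"
    then obtain lam f w where "f \<in> eig_kernel (wco_op m \<beta>) lam" "w \<in> ball 0 1" "f w \<noteq> 0"
      by (auto simp: point_spectrum_def)
    then show False using B_no_eig[OF ctx LB] by blast
  qed
qed

end
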